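(* Let $P$ be a poset, $I$ a non-empty index set, and $\mathcal{U}_i$ a maximal join-specification for $P$ for each $i\in I$. Then $\bigcap_{i\in I}\mathcal{U}_i$ is also maximal.
   Context: A join-specification for $P$ is a set $\mathcal{U}\subseteq\wp(P)$ such that $\bigvee S$ exists in $P$ for every $S\in\mathcal{U}$ and $\{p\}\in\mathcal{U}$ for every $p\in P$. A $\mathcal{U}$-ideal is a down-closed $C\subseteq P$ with $\bigvee S\in C$ whenever $S\in\mathcal{U}$, $S\subseteq C$; $\Gamma_{\mathcal{U}}(S)$ is the smallest $\mathcal{U}$-ideal containing $S$. $\mathcal{U}^+=\{S\subseteq P:\bigvee S\text{ exists in }P\text{ and }\bigvee S\in\Gamma_{\mathcal{U}}(S)\}$, and $\mathcal{U}$ is maximal if $\mathcal{U}=\mathcal{U}^+$. *)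

theory Defs
  imports Main
begin

text \<open>The poset P is modelled as the whole carrier of a type of class order.\<close>

definition is_join :: "'a::order set \<Rightarrow> 'a \<Rightarrow> bool" where
  "is_join S x \<longleftrightarrow> (\<forall>s\<in>S. s \<le> x) \<and> (\<forall>y. (\<forall>s\<in>S. s \<le> y) \<longrightarrow> x \<le> y)"

definition has_join :: "'a::order set \<Rightarrow> bool" where
  "has_join S \<longleftrightarrow> (\<exists>x. is_join S x)"

definition join :: "'a::order set \<Rightarrow> 'a" where
  "join S = (THE x. is_join S x)"

definition join_spec :: "'a::order set set \<Rightarrow> bool" where
  "join_spec U \<longleftrightarrow> (\<forall>S\<in>U. has_join S) \<and> (\<forall>p. {p} \<in> U)"

definition U_ideal :: "'a::order set set \<Rightarrow> 'a set \<Rightarrow> bool" where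
  "U_ideal U C \<longleftrightarrow> (\<forall>x y. y \<in> C \<longrightarrow> x \<le> y \<longrightarrow> x \<in> C)
                   \<and> (\<forall>S\<in>U. S \<subseteq> C \<longrightarrow> join S \<in> C)"

definition Gamma :: "'a::order set set \<Rightarrow> 'a set \<Rightarrow> 'a set" where
  "Gamma U S = \<Inter>{C. U_ideal U C \<and> S \<subseteq> C}"

definition U_plus :: "'a::order set set \<Rightarrow> 'a set set" where
  "U_plus U = {S. has_join S \<and> join S \<in> Gamma U S}"

definition maximal_join_spec :: "'a::order set set \<Rightarrow> bool" where
  "maximal_join_spec U \<longleftrightarrow> join_spec U \<and> U = U_plus U"

end

theory Submission
  imports Defs
begin

lemma U_ideal_anti: "V \<subseteq> W \<Longrightarrow> U_ideal W C \<Longrightarrow> U_ideal V C"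
  unfolding U_ideal_def by (meson subsetD)

lemma Gamma_mono: "V \<subseteq> W \<Longrightarrow> Gamma V S \<subseteq> Gamma W S"
  unfolding Gamma_def using U_ideal_anti by (smt (verit) Collect_mono Inf_superset_mono)

lemma Gamma_join: "S \<in> V \<Longrightarrow> join S \<in> Gamma V S"
  unfolding Gamma_def U_ideal_def by auto

theorem lemma2p24:
  fixes I :: "'i set" and U :: "'i \<Rightarrow> 'a::order set set"
  assumes "I \<noteq> {}"
    and "\<And>i. i \<in> I \<Longrightarrow> maximal_join_spec (U i)"
  shows "maximal_join_spec (\<Inter>i\<in>I. U i)"
proof -
  let ?V = "\<Inter>i\<in>I. U i"
  have mj: "join_spec (U i)" "U i = U_plus (U i)" if "i \<in> I" for i
    using assms(2)[OF that] unfolding maximal_join_spec_def by auto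
  obtain i0 where i0: "i0 \<in> I" using assms(1) by auto
  have hj: "has_join S" if "S \<in> ?V" for S
  proof -
    have "S \<in> U i0" using that i0 by auto
    thus ?thesis using mj(1)[OF i0] unfolding join_spec_def by auto
  qed
  have sg: "{p} \<in> ?V" for p
    using mj(1) unfolding join_spec_def by auto
  have js: "join_spec ?V"
    unfolding join_spec_def using hj sg by auto
  have sub1: "?V \<subseteq> U_plus ?V"
  proof
    fix S assume "S \<in> ?V"
    hence "has_join S \<and> join S \<in> Gamma ?V S" using Gamma_join hj by blast
    thus "S \<in> U_plus ?V" unfolding U_plus_def by simp
  qed
  have sub2: "U_plus ?V \<subseteq> ?V"
  proof
    fix S assume S: "S \<in> U_plus ?V"
    show "S \<in> ?V"
    proof
      fix i assume i: "i \<in> I"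
      have "?V \<subseteq> U i" using i by auto
      hence "Gamma ?V S \<subseteq> Gamma (U i) S" by (rule Gamma_mono)
      hence "S \<in> U_plus (U i)" using S unfolding U_plus_def by auto
      thus "S \<in> U i" using mj(2)[OF i] by simp
    qed
  qed
  have "?V = U_plus ?V" using sub1 sub2 by (rule equalityI)
  with js show ?thesis unfolding maximal_join_spec_def by (rule conjI)
qed

end
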